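(* Let $u,w$ be words over $\{L,R\}$. If $w$ starts with $L$ and $u$ is a tail of $w$, then $Lu$ is reduced from $Lw$. Dually, if $w$ starts with $R$ and $u$ is a tail of $w$, then $Ru$ is reduced from $Rw$.
   Context: Words are finite strings (including the empty word) over $\{L,R\}$. A tail of $w$ is any word $v'$ with $w=vv'$ for some word $v$. A word $u$ is reduced from $w$ if it is obtained from $w$ by finitely many (possibly zero) successive applications of the reduction rules, where $v,v'$ are arbitrary words: (1) $vRRv'\Rightarrow vRv'$; (1') $vLLv'\Rightarrow vLv'$; (2) $vLRv'\Rightarrow vv'$; (2') $vRLv'\Rightarrow vv'$. *)

theory Defs
  imports Main
begin

datatype letter = L | R

type_synonym word = "letter list"

inductive red_step :: "word \<Rightarrow> word \<Rightarrow> bool" where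
  rRR: "red_step (v @ [R, R] @ v') (v @ [R] @ v')"
| rLL: "red_step (v @ [L, L] @ v') (v @ [L] @ v')"
| rLR: "red_step (v @ [L, R] @ v') (v @ v')"
| rRL: "red_step (v @ [R, L] @ v') (v @ v')"

definition reduced_from :: "word \<Rightarrow> word \<Rightarrow> bool" where
  "reduced_from u w \<longleftrightarrow> red_step\<^sup>*\<^sup>* w u"

definition is_tail :: "word \<Rightarrow> word \<Rightarrow> bool" where
  "is_tail u w \<longleftrightarrow> (\<exists>v. w = v @ u)"

end

theory Submission
  imports Defs
begin

lemma step_pre: "red_step x y \<Longrightarrow> red_step (c # x) (c # y)"
proof (induction rule: red_step.induct)
  case (rRR v v') then show ?case using red_step.rRR[of "c#v" v'] by simp
next
  case (rLL v v') then show ?case using red_step.rLL[of "c#v" v'] by simp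
next
  case (rLR v v') then show ?case using red_step.rLR[of "c#v" v'] by simp
next
  case (rRL v v') then show ?case using red_step.rRL[of "c#v" v'] by simp
qed

lemma s1: "red_step (a#a#r) (a#r)"
  using red_step.rRR[of "[]" r] red_step.rLL[of "[]" r] by (cases a) auto

lemma s0: "a \<noteq> b \<Longrightarrow> red_step (a#b#r) r"
  using red_step.rRL[of "[]" r] red_step.rLR[of "[]" r]
  by (cases a; cases b) auto

lemma key: "length v \<le> n \<Longrightarrow> red_step\<^sup>*\<^sup>* (a#a#v@u) (a#u)"
proof (induction n arbitrary: v)
  case 0 then show ?case using s1 by auto
next
  case (Suc n)
  show ?case
  proof (cases v)
    case Nil then show ?thesis using s1 by auto
  next
    case (Cons b v3)
    show ?thesis
    proof (cases "b = a")
      case True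
      have "red_step (a#a#v@u) (a#a#v3@u)" using s1[of a "a#v3@u"] Cons True by simp
      moreover have "red_step\<^sup>*\<^sup>* (a#a#v3@u) (a#u)" using Suc Cons by simp
      ultimately show ?thesis by (meson converse_rtranclp_into_rtranclp)
    next
      case False
      show ?thesis
      proof (cases v3)
        case Nil
        have "red_step (a#a#b#u) (a#u)" using step_pre[OF s0[of a b u]] False by simp
        then show ?thesis using Cons Nil by simp
      next
        case Cons2: (Cons c v4)
        show ?thesis
        proof (cases "c = b")
          case True
          have "red_step (a#a#b#b#v4@u) (a#a#b#v4@u)"
            using step_pre[OF step_pre[OF s1[of b "v4@u"]]] .
          moreover have "red_step\<^sup>*\<^sup>* (a#a#(b#v4)@u) (a#u)" using Suc.IH[of "b#v4"] Suc.prems Cons Cons2 by simp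
          ultimately show ?thesis using Cons Cons2 True
            by (simp add: converse_rtranclp_into_rtranclp)
        next
          case F2: False
          have "red_step (a#a#b#c#v4@u) (a#a#v4@u)"
            using step_pre[OF step_pre[OF s0[of b c "v4@u"]]] F2 by simp
          moreover have "red_step\<^sup>*\<^sup>* (a#a#v4@u) (a#u)" using Suc Cons Cons2 by simp
          ultimately show ?thesis using Cons Cons2
            by (simp add: converse_rtranclp_into_rtranclp)
        qed
      qed
    qed
  qed
qed

lemma gen: "hd w = a \<Longrightarrow> w \<noteq> [] \<Longrightarrow> is_tail u w \<Longrightarrow> reduced_from (a # u) (a # w)"
  unfolding reduced_from_def is_tail_def
proof -
  assume h: "hd w = a" "w \<noteq> []" "\<exists>v. w = v @ u"
  then obtain v where v: "w = v @ u" by blast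
  show "red_step\<^sup>*\<^sup>* (a # w) (a # u)"
  proof (cases v)
    case Nil then show ?thesis using v by simp
  next
    case (Cons b v')
    then have "b = a" using h v by simp
    then show ?thesis using key[of v' "length v'" a u] v Cons by simp
  qed
qed

theorem mainTheorem6:
  fixes u w :: word
  shows "(hd w = L \<and> w \<noteq> [] \<and> is_tail u w \<longrightarrow> reduced_from (L # u) (L # w))
       \<and> (hd w = R \<and> w \<noteq> [] \<and> is_tail u w \<longrightarrow> reduced_from (R # u) (R # w))"
  using gen by blast

end
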